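(* Let $A$ be a finite set, $p : A \to [0,1]$, and $\gamma : \mathbb{N}^* \to (0,1]$ non-increasing; set $p_i(u) := \gamma(i)p(u)$. Let $\{X_i(u)\}_{i\ge1,u\in A}$ be independent with $X_i(u)\sim\mathrm{Bernoulli}(p_i(u))$. For $n \ge 1$ define $Z_n(u) := \mathds{1}\{X_1(u)=\dots=X_n(u)=0\}$, $R_n := \sum_{u\in A} Z_n(u)\,p_{n+1}(u)$, \[ U^\gamma_n(u) := \sum_{i=1}^n \mathds{1}\{X_i(u)=1,\ X_j(u)=0\ \forall j\in\{1,\dots,n\}\setminus\{i\}\}\,\frac{\gamma(n+1)}{\gamma(i)}, \] $\hat R_n := \frac1n\sum_{u\in A}U^\gamma_n(u)$, and $\lambda := \sum_{u\in A}p(u)$. Then \[ \mathbb{E}[R_n] - \mathbb{E}[\hat R_n] \in \left[-\gamma(n+1)\frac{\lambda}{n}, 0\right]. \]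
   Context: Influencer fatigue model: at the $i$-th selection of the influencer, node $u$ is activated with probability $\gamma(i)p(u)$, independently across nodes and selections. $R_n$ is the remaining potential for the $(n+1)$-th selection, $\hat R_n$ the reweighted Good-Turing estimator. *)

theory Defs
  imports "HOL-Probability.Probability"
begin

text \<open>Influencer fatigue model. X i u w is the outcome (True = activated) of node u
at the i-th selection; indices i start at 1.\<close>

definition fat_Z :: "(nat \<Rightarrow> 'a \<Rightarrow> 'w \<Rightarrow> bool) \<Rightarrow> nat \<Rightarrow> 'a \<Rightarrow> 'w \<Rightarrow> real" where
  "fat_Z X n u w = (if \<forall>i\<in>{1..n}. \<not> X i u w then 1 else 0)"

definition fat_R :: "(nat \<Rightarrow> real) \<Rightarrow> ('a \<Rightarrow> real) \<Rightarrow> 'a set \<Rightarrow>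
    (nat \<Rightarrow> 'a \<Rightarrow> 'w \<Rightarrow> bool) \<Rightarrow> nat \<Rightarrow> 'w \<Rightarrow> real" where
  "fat_R \<gamma> p A X n w = (\<Sum>u\<in>A. fat_Z X n u w * (\<gamma> (n + 1) * p u))"

definition fat_U :: "(nat \<Rightarrow> real) \<Rightarrow> (nat \<Rightarrow> 'a \<Rightarrow> 'w \<Rightarrow> bool) \<Rightarrow> nat \<Rightarrow> 'a \<Rightarrow> 'w \<Rightarrow> real" where
  "fat_U \<gamma> X n u w = (\<Sum>i=1..n.
      (if X i u w \<and> (\<forall>j\<in>{1..n} - {i}. \<not> X j u w) then 1 else 0) * (\<gamma> (n + 1) / \<gamma> i))"

definition fat_Rhat :: "(nat \<Rightarrow> real) \<Rightarrow> 'a set \<Rightarrow>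
    (nat \<Rightarrow> 'a \<Rightarrow> 'w \<Rightarrow> bool) \<Rightarrow> nat \<Rightarrow> 'w \<Rightarrow> real" where
  "fat_Rhat \<gamma> A X n w = (1 / real n) * (\<Sum>u\<in>A. fat_U \<gamma> X n u w)"

end

theory Submission imports Defs begin

lemma (in prob_space) pattern_prob:
  fixes X :: "nat \<Rightarrow> 'b \<Rightarrow> 'a \<Rightarrow> bool"
  assumes indep: "indep_vars (\<lambda>_. count_space UNIV) (\<lambda>(i, u). X i u) ({1..} \<times> A)"
    and dist: "\<forall>i\<ge>1. \<forall>u\<in>A. distr M (count_space UNIV) (X i u) = measure_pmf (bernoulli_pmf (q i u))"
    and q: "\<forall>i\<ge>1. \<forall>u\<in>A. 0 \<le> q i u \<and> q i u \<le> 1"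
    and u: "u \<in> A" and J: "finite J" "J \<noteq> {}" "J \<subseteq> {1..}"
  shows "{w\<in>space M. \<forall>j\<in>J. X j u w = b j} \<in> events"
    "prob {w\<in>space M. \<forall>j\<in>J. X j u w = b j} = (\<Prod>j\<in>J. if b j then q j u else 1 - q j u)"
proof -
  have rv: "\<And>j. j \<in> J \<Longrightarrow> X j u \<in> measurable M (count_space UNIV)"
    using indep J u unfolding indep_vars_def2 by fastforce
  have ind: "indep_sets (\<lambda>i. { (\<lambda>(i, u). X i u) i -` B \<inter> space M | B. B \<in> sets (count_space UNIV)}) ({1..} \<times> A)"
    using indep unfolding indep_vars_def2 by blast
  define S where "S = (\<lambda>(j::nat, v::'b). X j v -` {b j} \<inter> space M)"
  have eq: "{w\<in>space M. \<forall>j\<in>J. X j u w = b j} = (\<Inter>k\<in>(\<lambda>j. (j, u)) ` J. S k)"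
    using J(2) by (auto simp: S_def)
  have single: "prob (S (j, u)) = (if b j then q j u else 1 - q j u)" if "j \<in> J" for j
  proof -
    have "prob (S (j, u)) = measure (distr M (count_space UNIV) (X j u)) {b j}"
      by (simp add: S_def measure_distr[OF rv[OF that]])
    also have "\<dots> = pmf (bernoulli_pmf (q j u)) (b j)"
      using dist J that u by (simp add: measure_pmf_single subset_iff)
    also have "\<dots> = (if b j then q j u else 1 - q j u)"
      using q J that u by (auto simp: subset_iff)
    finally show ?thesis .
  qed
  have "prob (\<Inter>k\<in>(\<lambda>j. (j, u)) ` J. S k) = (\<Prod>k\<in>(\<lambda>j. (j, u)) ` J. prob (S k))"
    apply (rule indep_setsD[OF ind])
    using J u by (auto simp: S_def)
  also have "\<dots> = (\<Prod>j\<in>J. prob (S (j, u)))"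
    by (subst prod.reindex) (auto simp: inj_on_def)
  also have "\<dots> = (\<Prod>j\<in>J. if b j then q j u else 1 - q j u)"
    by (rule prod.cong) (auto simp: single)
  finally show "prob {w\<in>space M. \<forall>j\<in>J. X j u w = b j} = (\<Prod>j\<in>J. if b j then q j u else 1 - q j u)"
    using eq by simp
  have "\<And>j. j \<in> J \<Longrightarrow> S (j, u) \<in> events"
    using rv by (auto simp: S_def)
  then show "{w\<in>space M. \<forall>j\<in>J. X j u w = b j} \<in> events"
    unfolding eq using J by (intro sets.finite_INT) auto
qed

lemma exactly_one_le:
  fixes q :: "nat \<Rightarrow> real"
  assumes "finite S" "\<forall>j\<in>S. 0 \<le> q j \<and> q j \<le> 1"
  shows "(\<Sum>i\<in>S. q i * (\<Prod>j\<in>S-{i}. 1 - q j)) + (\<Prod>j\<in>S. 1 - q j) \<le> 1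
       \<and> 0 \<le> (\<Sum>i\<in>S. q i * (\<Prod>j\<in>S-{i}. 1 - q j))"
  using assms
proof (induction S rule: finite_induct)
  case empty then show ?case by simp
next
  case (insert x S)
  let ?f = "\<Sum>i\<in>S. q i * (\<Prod>j\<in>S-{i}. 1 - q j)"
  let ?g = "\<Prod>j\<in>S. 1 - q j"
  have IH: "?f + ?g \<le> 1" "0 \<le> ?f" using insert by auto
  have qx: "0 \<le> q x" "q x \<le> 1" using insert by auto
  have g0: "0 \<le> ?g" using insert by (intro prod_nonneg) auto
  have s1: "(\<Sum>i\<in>insert x S. q i * (\<Prod>j\<in>insert x S-{i}. 1 - q j)) = q x * ?g + (1 - q x) * ?f"
  proof -
    have "(\<Sum>i\<in>S. q i * (\<Prod>j\<in>insert x S-{i}. 1 - q j)) = (\<Sum>i\<in>S. (1 - q x) * (q i * (\<Prod>j\<in>S-{i}. 1 - q j)))"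
    proof (rule sum.cong)
      fix i assume "i \<in> S"
      then have "insert x S - {i} = insert x (S - {i})" using insert by auto
      then show "q i * (\<Prod>j\<in>insert x S-{i}. 1 - q j) = (1 - q x) * (q i * (\<Prod>j\<in>S-{i}. 1 - q j))"
        using insert by simp
    qed simp
    moreover have "insert x S - {x} = S" using insert by auto
    ultimately show ?thesis using insert by (simp add: sum_distrib_left)
  qed
  have s2: "(\<Prod>j\<in>insert x S. 1 - q j) = (1 - q x) * ?g" using insert by simp
  have "(1 - q x) * ?f \<le> ?f" using qx IH by (simp add: mult_le_cancel_right1 mult_left_le_one_le)
  moreover have "0 \<le> (1 - q x) * ?f" using qx IH by simp
  moreover have "0 \<le> q x * ?g" using qx g0 by simp
  ultimately show ?case unfolding s1 s2 using IH by (simp add: algebra_simps)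
qed

theorem mainTheorem5:
  fixes M :: "'w measure" and A :: "'a set" and p :: "'a \<Rightarrow> real"
    and \<gamma> :: "nat \<Rightarrow> real" and X :: "nat \<Rightarrow> 'a \<Rightarrow> 'w \<Rightarrow> bool" and n :: nat
  assumes "prob_space M"
    and "finite A"
    and "\<forall>u\<in>A. 0 \<le> p u \<and> p u \<le> 1"
    and "\<forall>i\<ge>1. 0 < \<gamma> i \<and> \<gamma> i \<le> 1"
    and "\<forall>i j. 1 \<le> i \<longrightarrow> i \<le> j \<longrightarrow> \<gamma> j \<le> \<gamma> i"
    and "prob_space.indep_vars M (\<lambda>_. count_space UNIV) (\<lambda>(i, u). X i u) ({1..} \<times> A)"
    and "\<forall>i\<ge>1. \<forall>u\<in>A. distr M (count_space UNIV) (X i u) = measure_pmf (bernoulli_pmf (\<gamma> i * p u))"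
    and "n \<ge> 1"
  shows "prob_space.expectation M (fat_R \<gamma> p A X n) - prob_space.expectation M (fat_Rhat \<gamma> A X n)
           \<in> {- \<gamma> (n + 1) * (\<Sum>u\<in>A. p u) / real n .. 0}"
proof -
  interpret P: prob_space M by fact
  note fin = assms(2) and pb = assms(3) and gb = assms(4) and n1 = assms(8)
  define q where "q i u = \<gamma> i * p u" for i u
  have qb: "\<forall>i\<ge>1. \<forall>u\<in>A. 0 \<le> q i u \<and> q i u \<le> 1"
    using pb gb by (auto simp: q_def mult_le_one)
  have dist: "\<forall>i\<ge>1. \<forall>u\<in>A. distr M (count_space UNIV) (X i u) = measure_pmf (bernoulli_pmf (q i u))"
    using assms(7) by (simp add: q_def)
  have J: "finite {1..n}" "{1..n} \<noteq> {}" "{1..n} \<subseteq> {1::nat..}" using n1 by auto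
  define E0 where "E0 u = {w\<in>space M. \<forall>j\<in>{1..n}. X j u w = False}" for u
  define E1 where "E1 u i = {w\<in>space M. \<forall>j\<in>{1..n}. X j u w = (j = i)}" for u i
  have ev0: "E0 u \<in> P.events" and pr0: "P.prob (E0 u) = (\<Prod>j\<in>{1..n}. 1 - q j u)" if "u \<in> A" for u
    using P.pattern_prob[OF assms(6) dist qb that J, of "\<lambda>_. False"] by (simp_all add: E0_def)
  have ev1: "E1 u i \<in> P.events" and pr1: "P.prob (E1 u i) = q i u * (\<Prod>j\<in>{1..n}-{i}. 1 - q j u)"
    if "u \<in> A" "i \<in> {1..n}" for u i
  proof -
    show "E1 u i \<in> P.events"
      using P.pattern_prob[OF assms(6) dist qb that(1) J, of "\<lambda>j. j = i"] by (simp_all add: E1_def)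
    have "P.prob (E1 u i) = (\<Prod>j\<in>{1..n}. if j = i then q j u else 1 - q j u)"
      using P.pattern_prob[OF assms(6) dist qb that(1) J, of "\<lambda>j. j = i"] by (simp_all add: E1_def)
    also have "\<dots> = q i u * (\<Prod>j\<in>{1..n}-{i}. if j = i then q j u else 1 - q j u)"
      using that by (subst prod.remove[of _ i]) auto
    also have "(\<Prod>j\<in>{1..n}-{i}. if j = i then q j u else 1 - q j u) = (\<Prod>j\<in>{1..n}-{i}. 1 - q j u)"
      by (rule prod.cong) auto
    finally show "P.prob (E1 u i) = q i u * (\<Prod>j\<in>{1..n}-{i}. 1 - q j u)" .
  qed
  have int0: "integrable M (indicator (E0 u) :: 'w \<Rightarrow> real)" if "u \<in> A" for u
    using ev0[OF that] by (intro integrable_real_indicator) (auto simp: P.emeasure_finite less_top[symmetric])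
  have int1: "integrable M (indicator (E1 u i) :: 'w \<Rightarrow> real)" if "u \<in> A" "i \<in> {1..n}" for u i
    using ev1[OF that] by (intro integrable_real_indicator) (auto simp: P.emeasure_finite less_top[symmetric])
  have R: "P.expectation (fat_R \<gamma> p A X n) = (\<Sum>u\<in>A. \<gamma>(n+1) * p u * P.prob (E0 u))"
  proof -
    have "P.expectation (fat_R \<gamma> p A X n) = P.expectation (\<lambda>w. \<Sum>u\<in>A. \<gamma>(n+1) * p u * indicator (E0 u) w)"
      by (rule Bochner_Integration.integral_cong) (auto simp: fat_R_def fat_Z_def E0_def indicator_def intro!: sum.cong)
    also have "\<dots> = (\<Sum>u\<in>A. P.expectation (\<lambda>w. \<gamma>(n+1) * p u * indicator (E0 u) w))"
      by (rule Bochner_Integration.integral_sum) (auto simp: int0)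
    also have "\<dots> = (\<Sum>u\<in>A. \<gamma>(n+1) * p u * P.prob (E0 u))"
    proof (rule sum.cong)
      fix u assume u: "u \<in> A"
      have "E0 u \<inter> space M = E0 u" by (auto simp: E0_def)
      then show "P.expectation (\<lambda>w. \<gamma>(n+1) * p u * indicator (E0 u) w) = \<gamma>(n+1) * p u * P.prob (E0 u)"
        by simp
    qed simp
    finally show ?thesis .
  qed
  have Rh: "P.expectation (fat_Rhat \<gamma> A X n) =
      (1 / real n) * (\<Sum>u\<in>A. \<Sum>i=1..n. \<gamma>(n+1) / \<gamma> i * P.prob (E1 u i))"
  proof -
    have "P.expectation (fat_Rhat \<gamma> A X n) = P.expectation (\<lambda>w. (1 / real n) * (\<Sum>u\<in>A. \<Sum>i=1..n. \<gamma>(n+1) / \<gamma> i * indicator (E1 u i) w))"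
      by (rule Bochner_Integration.integral_cong) (auto simp: fat_Rhat_def fat_U_def E1_def indicator_def intro!: sum.cong)
    also have "\<dots> = (1 / real n) * (\<Sum>u\<in>A. \<Sum>i=1..n. P.expectation (\<lambda>w. \<gamma>(n+1) / \<gamma> i * indicator (E1 u i) w))"
      apply (subst Bochner_Integration.integral_mult_right_zero)
      apply (subst Bochner_Integration.integral_sum)
      by (auto intro!: Bochner_Integration.integrable_sum simp: int1)
    also have "\<dots> = (1 / real n) * (\<Sum>u\<in>A. \<Sum>i=1..n. \<gamma>(n+1) / \<gamma> i * P.prob (E1 u i))"
    proof -
      have "E1 u i \<inter> space M = E1 u i" for u i by (auto simp: E1_def)
      then show ?thesis by simp
    qed
    finally show ?thesis .
  qed
  define f where "f u = (\<Sum>i\<in>{1..n}. q i u * (\<Prod>j\<in>{1..n}-{i}. 1 - q j u))" for u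
  have fb: "0 \<le> f u \<and> f u \<le> 1" if "u \<in> A" for u
  proof -
    have "0 \<le> (\<Prod>j\<in>{1..n}. 1 - q j u)" using qb that by (intro prod_nonneg) auto
    then show ?thesis using exactly_one_le[of "{1..n}" "\<lambda>j. q j u"] qb that by (auto simp: f_def)
  qed
  have D: "\<gamma>(n+1) * p u * P.prob (E0 u) - (1 / real n) * (\<Sum>i=1..n. \<gamma>(n+1) / \<gamma> i * P.prob (E1 u i))
      = - (\<gamma>(n+1) / real n) * (p u * f u)" if u: "u \<in> A" for u
  proof -
    let ?g = "\<Prod>j\<in>{1..n}. 1 - q j u"
    have a: "(\<Sum>i=1..n. \<gamma>(n+1) / \<gamma> i * P.prob (E1 u i)) = \<gamma>(n+1) * p u * (\<Sum>i=1..n. (\<Prod>j\<in>{1..n}-{i}. 1 - q j u))"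
      unfolding sum_distrib_left
    proof (rule sum.cong)
      fix i assume i: "i \<in> {1..n}"
      then have "\<gamma> i > 0" using gb by auto
      then show "\<gamma>(n+1) / \<gamma> i * P.prob (E1 u i) = \<gamma>(n+1) * p u * (\<Prod>j\<in>{1..n}-{i}. 1 - q j u)"
        using pr1[OF u i] by (simp add: q_def)
    qed simp
    have b: "(\<Sum>i=1..n. (\<Prod>j\<in>{1..n}-{i}. 1 - q j u)) = real n * ?g + f u"
    proof -
      have "(\<Sum>i=1..n. (\<Prod>j\<in>{1..n}-{i}. 1 - q j u)) = (\<Sum>i=1..n. ?g + q i u * (\<Prod>j\<in>{1..n}-{i}. 1 - q j u))"
      proof (rule sum.cong)
        fix i assume i: "i \<in> {1..n}"
        have "?g = (1 - q i u) * (\<Prod>j\<in>{1..n}-{i}. 1 - q j u)"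
          using i by (subst prod.remove[of _ i]) auto
        then show "(\<Prod>j\<in>{1..n}-{i}. 1 - q j u) = ?g + q i u * (\<Prod>j\<in>{1..n}-{i}. 1 - q j u)"
          by (simp add: algebra_simps)
      qed simp
      then show ?thesis by (simp add: sum.distrib f_def)
    qed
    show ?thesis unfolding a b pr0[OF u] using n1 by (simp add: field_simps)
  qed
  have diff: "P.expectation (fat_R \<gamma> p A X n) - P.expectation (fat_Rhat \<gamma> A X n)
      = - (\<gamma>(n+1) / real n) * (\<Sum>u\<in>A. p u * f u)"
  proof -
    have "P.expectation (fat_R \<gamma> p A X n) - P.expectation (fat_Rhat \<gamma> A X n)
      = (\<Sum>u\<in>A. \<gamma>(n+1) * p u * P.prob (E0 u) - (1 / real n) * (\<Sum>i=1..n. \<gamma>(n+1) / \<gamma> i * P.prob (E1 u i)))"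
      unfolding R Rh sum_subtractf sum_distrib_left ..
    also have "\<dots> = (\<Sum>u\<in>A. - (\<gamma>(n+1) / real n) * (p u * f u))"
      by (rule sum.cong) (simp, rule D)
    also have "\<dots> = - (\<gamma>(n+1) / real n) * (\<Sum>u\<in>A. p u * f u)"
      by (simp add: sum_distrib_left)
    finally show ?thesis .
  qed
  have s1: "0 \<le> (\<Sum>u\<in>A. p u * f u)" using fb pb by (intro sum_nonneg) auto
  have s2: "(\<Sum>u\<in>A. p u * f u) \<le> (\<Sum>u\<in>A. p u)"
    using fb pb by (intro sum_mono) (simp add: mult_left_le)
  have gpos: "0 < \<gamma>(n+1)" using gb by auto
  have c: "0 \<le> \<gamma>(n+1) / real n" using gpos n1 by simp
  show ?thesis unfolding diff
    using mult_left_mono[OF s2 c] mult_nonneg_nonneg[OF c s1]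
    by (auto simp: field_simps)
qed

end
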